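(* Let $B$ be a symmetric positive definite $3\times3$ matrix with orthonormal eigenvectors $\mathbf e_1,\mathbf e_2,\mathbf e_3$, and let $\mathbb M=\sum_{i=1}^3\mathbf e_i\mathbf e_i\mathbf e_i\mathbf e_i$ (so $\mathbb M_{abcd}=\sum_i (\mathbf e_i)_a(\mathbf e_i)_b(\mathbf e_i)_c(\mathbf e_i)_d$). Then for every symmetric $3\times3$ matrix $N$, $$\mathbb D(B):(\mathbb M:N)=\mathbb M:(\mathbb D(B):N).$$ Consequently, if $\frac{dA}{dt}=F$, $\frac{dB}{dt}=G$ with $F=-\mathbb C(B):G$ (equivalently $G=-\mathbb D(B):F$), and $0<\kappa\le1$, then replacing $F$ by $F-(1-\kappa)\mathbb M:F$ and $G$ by $G-(1-\kappa)\mathbb M:G$ preserves the relation $\frac{dB}{dt}=-\mathbb D(B):\frac{dA}{dt}$.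
   Context: For a symmetric positive definite matrix $B$, $$\mathbb C(B)=\tfrac34\int_0^\infty\frac{\mathcal S\big((B+sI)^{-1}\otimes(B+sI)^{-1}\big)\,ds}{\sqrt{\det(B+sI)}},$$ where $\mathcal S(\mathbb T)_{ijkl}$ is the average of $\mathbb T_{mnpq}$ over all permutations $(m,n,p,q)$ of $(i,j,k,l)$, and $(\mathbb T:M)_{ij}=\sum_{k,l}\mathbb T_{ijkl}M_{kl}$. The map $M\mapsto\mathbb C(B):M$ on symmetric matrices is invertible, and $\mathbb D(B)$ denotes the rank-4 tensor with $\mathbb D_{ijkl}=\mathbb D_{jikl}=\mathbb D_{ijlk}$ such that $\mathbb C(B):\mathbb D(B):M=\mathbb D(B):\mathbb C(B):M=M$ for all symmetric $M$. *)

theory Defs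
  imports "HOL-Analysis.Analysis" "HOL-Combinatorics.Permutations"
begin

type_synonym mat3 = "real^3^3"
type_synonym tensor4 = "3 \<Rightarrow> 3 \<Rightarrow> 3 \<Rightarrow> 3 \<Rightarrow> real"

definition ddot :: "tensor4 \<Rightarrow> mat3 \<Rightarrow> mat3" (infixr "\<bullet>\<bullet>" 70) where
  "T \<bullet>\<bullet> M = (\<chi> i j. \<Sum>k\<in>UNIV. \<Sum>l\<in>UNIV. T i j k l * M $ k $ l)"

definition tprod :: "mat3 \<Rightarrow> mat3 \<Rightarrow> tensor4" where
  "tprod P Q = (\<lambda>i j k l. P $ i $ j * Q $ k $ l)"

definition symmetrize :: "tensor4 \<Rightarrow> tensor4" where
  "symmetrize T = (\<lambda>i j k l.
     (let idx = (\<lambda>n::nat. [i, j, k, l] ! n) in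
      (\<Sum>p\<in>{p. p permutes {..<4::nat}}. T (idx (p 0)) (idx (p 1)) (idx (p 2)) (idx (p 3))) / 24))"

definition symmetric_mat :: "mat3 \<Rightarrow> bool" where
  "symmetric_mat M \<longleftrightarrow> transpose M = M"

definition spd :: "mat3 \<Rightarrow> bool" where
  "spd B \<longleftrightarrow> symmetric_mat B \<and> (\<forall>x. x \<noteq> 0 \<longrightarrow> x \<bullet> (B *v x) > 0)"

definition CC :: "mat3 \<Rightarrow> tensor4" where
  "CC B = (\<lambda>i j k l. 3/4 * integral {0..}
      (\<lambda>s::real. symmetrize (tprod (matrix_inv (B + s *\<^sub>R mat 1)) (matrix_inv (B + s *\<^sub>R mat 1))) i j k l
                 / sqrt (det (B + s *\<^sub>R mat 1))))"

definition minor_sym :: "tensor4 \<Rightarrow> bool" where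
  "minor_sym D \<longleftrightarrow> (\<forall>i j k l. D i j k l = D j i k l \<and> D i j k l = D i j l k)"

definition DD :: "mat3 \<Rightarrow> tensor4" where
  "DD B = (SOME D. minor_sym D \<and> (\<forall>M. symmetric_mat M \<longrightarrow>
              CC B \<bullet>\<bullet> (D \<bullet>\<bullet> M) = M \<and> D \<bullet>\<bullet> (CC B \<bullet>\<bullet> M) = M))"

definition MM :: "(3 \<Rightarrow> real^3) \<Rightarrow> tensor4" where
  "MM e = (\<lambda>a b c d. \<Sum>i\<in>UNIV. e i $ a * e i $ b * e i $ c * e i $ d)"

end

theory Submission
  imports Defs
begin

lemma perm4_sum:
  "(\<Sum>p\<in>{p. p permutes {..<4::nat}}. f p) =
   (\<Sum>b\<in>{0,1,2,3::nat}. \<Sum>c\<in>{1,2,3::nat}. \<Sum>d\<in>{2,3::nat}. \<Sum>e\<in>{3::nat}. 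
     f (Transposition.transpose 0 b \<circ> (Transposition.transpose 1 c \<circ> (Transposition.transpose 2 d \<circ> (Transposition.transpose 3 e \<circ> id)))))"
proof -
  have U: "{..<4::nat} = insert 0 (insert 1 (insert 2 (insert 3 {})))" by auto
  show ?thesis unfolding U
    by (simp add: sum_over_permutations_insert)
qed

lemma sym_expand:
  "symmetrize T a b c d = (T a b c d + T a b d c + T a c b d + T a c d b + T a d b c + T a d c b
   + T b a c d + T b a d c + T b c a d + T b c d a + T b d a c + T b d c a
   + T c a b d + T c a d b + T c b a d + T c b d a + T c d a b + T c d b a
   + T d a b c + T d a c b + T d b a c + T d b c a + T d c a b + T d c b a) / 24"
  unfolding symmetrize_def Let_def perm4_sum
  by (simp add: Transposition.transpose_def algebra_simps)

definition outer :: "real^3 \<Rightarrow> real^3 \<Rightarrow> mat3" where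
  "outer u v = (\<chi> a b. u$a * v$b)"

definition nn :: "real^3 \<Rightarrow> mat3 \<Rightarrow> real^3 \<Rightarrow> real" where
  "nn u N v = u \<bullet> (N *v v)"

lemma S_outer_entry:
  "symmetrize (tprod (outer u u) (outer v v)) a b c d =
    (u$a*u$b* v$c* v$d + v$a* v$b*u$c*u$d + u$a*u$c* v$b* v$d + v$a* v$c*u$b*u$d
     + u$a*u$d* v$b* v$c + v$a* v$d*u$b*u$c)/6"
  unfolding sym_expand tprod_def outer_def by (simp add: field_simps)

lemma S_outer_ddot:
  "symmetrize (tprod (outer u u) (outer v v)) \<bullet>\<bullet> N =
    (1/6) *\<^sub>R (nn v N v *\<^sub>R outer u u + nn u N u *\<^sub>R outer v v
      + (nn u N v + nn v N u) *\<^sub>R (outer u v + outer v u))"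
  unfolding vec_eq_iff ddot_def S_outer_entry
  by (simp add: nn_def outer_def sum_3 inner_vec_def matrix_vector_mult_def
      field_simps)

lemma ddot_add: "T \<bullet>\<bullet> (X + Y) = T \<bullet>\<bullet> X + T \<bullet>\<bullet> Y"
  by (simp add: vec_eq_iff ddot_def algebra_simps sum.distrib)
lemma ddot_scale: "T \<bullet>\<bullet> (c *\<^sub>R X) = c *\<^sub>R (T \<bullet>\<bullet> X)"
  by (simp add: vec_eq_iff ddot_def sum_distrib_left algebra_simps)
lemma ddot_minus: "T \<bullet>\<bullet> (- X) = - (T \<bullet>\<bullet> X)"
  by (simp add: vec_eq_iff ddot_def sum_negf)
lemma ddot_diff: "T \<bullet>\<bullet> (X - Y) = T \<bullet>\<bullet> X - T \<bullet>\<bullet> Y"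
  by (simp add: vec_eq_iff ddot_def algebra_simps sum_subtractf)
lemma ddot_zero: "T \<bullet>\<bullet> 0 = 0"
  by (simp add: vec_eq_iff ddot_def)
lemma ddot_sum: "T \<bullet>\<bullet> (\<Sum>i\<in>A. X i) = (\<Sum>i\<in>A. T \<bullet>\<bullet> X i)"
  by (induction A rule: infinite_finite_induct) (auto simp: ddot_zero ddot_add)
lemma ddot_linear: "linear (\<lambda>X. T \<bullet>\<bullet> X)"
  by (rule linearI) (simp_all add: ddot_add ddot_scale)
lemma ddot_tsum: "(\<lambda>a b c d. \<Sum>i\<in>A. f i a b c d) \<bullet>\<bullet> N = (\<Sum>i\<in>A. f i \<bullet>\<bullet> N)"
proof -
  have "(\<Sum>k\<in>UNIV. \<Sum>l\<in>UNIV. (\<Sum>i\<in>A. f i a b k l) * N $ k $ l) =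
        (\<Sum>i\<in>A. \<Sum>k\<in>UNIV. \<Sum>l\<in>UNIV. f i a b k l * N $ k $ l)" for a b
    by (simp add: sum_distrib_right sum.swap[of _ A] )
  then show ?thesis by (simp add: vec_eq_iff ddot_def sum_component)
qed
lemma ddot_tscale: "(\<lambda>a b c d. k * f a b c d) \<bullet>\<bullet> N = k *\<^sub>R (f \<bullet>\<bullet> N)"
  by (simp add: vec_eq_iff ddot_def sum_distrib_left algebra_simps)

lemma sym_sum: "symmetrize (\<lambda>x y z t. \<Sum>k\<in>A. f k x y z t) = (\<lambda>x y z t. \<Sum>k\<in>A. symmetrize (f k) x y z t)"
  unfolding symmetrize_def Let_def
  by (simp add: sum_divide_distrib[symmetric]; intro ext; subst sum.swap; simp)

lemma sym_scale: "symmetrize (\<lambda>x y z t. k * f x y z t) = (\<lambda>x y z t. k * symmetrize f x y z t)"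
  unfolding symmetrize_def Let_def by (simp add: sum_distrib_left)


definition Qm :: "(3 \<Rightarrow> real^3) \<Rightarrow> mat3" where "Qm e = (\<chi> i. e i)"

locale ortho =
  fixes e :: "3 \<Rightarrow> real^3"
  assumes orth: "\<And>i j. e i \<bullet> e j = (if i = j then 1 else 0)"
begin

abbreviation "Q \<equiv> Qm e"

lemma QQt: "Q ** transpose Q = mat 1"
  using orth by (simp add: vec_eq_iff matrix_matrix_mult_def transpose_def mat_def Qm_def inner_vec_def)

lemma QtQ: "transpose Q ** Q = mat 1"
  using QQt matrix_left_right_inverse by blast

lemma QtQ': "transpose Q ** (Q ** Z) = Z"
  by (metis matrix_mul_assoc QtQ matrix_mul_lid)
lemma QQt': "Q ** (transpose Q ** Z) = Z"
  by (metis matrix_mul_assoc QQt matrix_mul_lid)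
lemmas Qsimps = QtQ QQt QtQ' QQt' matrix_mul_rid matrix_mul_lid

lemma complete: "(\<Sum>i\<in>UNIV. e i $ a * e i $ b) = (if a = b then 1 else 0)"
proof -
  have "(transpose Q ** Q) $ a $ b = (if a = b then 1 else 0)" using QtQ by (simp add: mat_def)
  then show ?thesis by (simp add: matrix_matrix_mult_def transpose_def Qm_def)
qed

definition co :: "mat3 \<Rightarrow> 3 \<Rightarrow> 3 \<Rightarrow> real" where
  "co X a b = e a \<bullet> (X *v e b)"

lemma co_Q: "co X a b = (Q ** X ** transpose Q) $ a $ b"
  by (simp add: co_def matrix_matrix_mult_def transpose_def Qm_def inner_vec_def
      matrix_vector_mult_def sum_3 algebra_simps)

lemma co_eq: assumes "\<And>a b. co X a b = co Y a b" shows "X = Y"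
proof -
  have "Q ** X ** transpose Q = Q ** Y ** transpose Q"
    using assms by (simp add: vec_eq_iff co_Q)
  then have "transpose Q ** (Q ** X ** transpose Q) ** Q = transpose Q ** (Q ** Y ** transpose Q) ** Q"
    by simp
  then show ?thesis by (simp add: Qsimps flip: matrix_mul_assoc)
qed

lemma co_add: "co (X + Y) a b = co X a b + co Y a b"
  by (simp add: co_def matrix_vector_mult_def inner_vec_def sum_3 algebra_simps)
lemma co_scale: "co (c *\<^sub>R X) a b = c * co X a b"
  by (simp add: co_def matrix_vector_mult_def inner_vec_def sum_3 algebra_simps)
lemma co_zero: "co 0 a b = 0"
  by (simp add: co_def)
lemma co_minus: "co (- X) a b = - co X a b"
  by (simp add: co_def matrix_vector_mult_def inner_vec_def sum_3 algebra_simps)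
lemma co_diff: "co (X - Y) a b = co X a b - co Y a b"
  by (simp add: co_def matrix_vector_mult_def inner_vec_def sum_3 algebra_simps)
lemma co_sum: "co (\<Sum>i\<in>A. X i) a b = (\<Sum>i\<in>A. co (X i) a b)"
  by (induction A rule: infinite_finite_induct) (auto simp: co_zero co_add)
lemma co_transpose: "co (transpose X) a b = co X b a"
  by (simp add: co_def matrix_vector_mult_def inner_vec_def sum_3 transpose_def algebra_simps)
lemma co_outer_gen: "co (outer u v) a b = (e a \<bullet> u) * (v \<bullet> e b)"
  by (simp add: co_def outer_def matrix_vector_mult_def inner_vec_def sum_3 algebra_simps)
lemma co_outer: "co (outer (e i) (e j)) a b = (if a = i \<and> b = j then 1 else 0)"
  by (simp add: co_outer_gen orth inner_commute)
lemma nn_co: "nn (e a) N (e b) = co N a b"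
  by (simp add: nn_def co_def)
lemma co_mult: "co (X ** Y) a b = (\<Sum>k\<in>UNIV. co X a k * co Y k b)"
proof -
  have "Q ** (X ** Y) ** transpose Q = (Q ** X ** transpose Q) ** (Q ** Y ** transpose Q)"
    by (simp add: Qsimps flip: matrix_mul_assoc)
  then show ?thesis by (simp add: co_Q matrix_matrix_mult_def)
qed

lemma symmetric_co: "symmetric_mat X \<longleftrightarrow> (\<forall>a b. co X a b = co X b a)"
proof
  assume "symmetric_mat X" then show "\<forall>a b. co X a b = co X b a"
    by (metis co_transpose symmetric_mat_def)
next
  assume "\<forall>a b. co X a b = co X b a" then show "symmetric_mat X"
    unfolding symmetric_mat_def by (intro co_eq) (simp add: co_transpose)
qed

definition dg :: "(3 \<Rightarrow> real) \<Rightarrow> mat3" where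
  "dg c = (\<Sum>i\<in>UNIV. c i *\<^sub>R outer (e i) (e i))"

lemma co_dg: "co (dg c) a b = (if a = b then c a else 0)"
  unfolding dg_def co_sum co_scale co_outer
  using exhaust_3[of a] exhaust_3[of b] by (auto simp: sum_3)

lemma dg_mult: "dg c ** dg d = dg (\<lambda>i. c i * d i)"
  by (rule co_eq) (use exhaust_3 in \<open>auto simp: co_mult co_dg sum_3\<close>)

lemma dg_one: "dg (\<lambda>i. 1) = mat 1"
proof (rule co_eq)
  fix a b
  have "co (mat 1) a b = (if a = b then 1 else 0)" by (simp add: co_def orth)
  then show "co (dg (\<lambda>i. 1)) a b = co (mat 1) a b" by (simp only: co_dg)
qed

lemma dg_add: "dg c + dg d = dg (\<lambda>i. c i + d i)"
  by (rule co_eq) (simp add: co_dg co_add)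
lemma dg_scale: "k *\<^sub>R dg c = dg (\<lambda>i. k * c i)"
  by (rule co_eq) (simp add: co_dg co_scale)

lemma dg_entry: "dg c $ x $ y = (\<Sum>i\<in>UNIV. c i * (e i $ x * e i $ y))"
  by (simp add: dg_def outer_def sum_component)

lemma dg_det: "det (dg c) = (\<Prod>i\<in>UNIV. c i)"
proof -
  define Dm :: mat3 where "Dm = (\<chi> i j. if i = j then c i else 0)"
  have "dg c = transpose Q ** Dm ** Q"
  proof (rule co_eq)
    fix a b
    have eq: "Q ** (transpose Q ** Dm ** Q) ** transpose Q = Dm"
      by (simp add: Qsimps flip: matrix_mul_assoc)
    show "co (dg c) a b = co (transpose Q ** Dm ** Q) a b"
      unfolding co_dg co_Q[of "transpose Q ** Dm ** Q"] eq by (simp add: Dm_def)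
  qed
  moreover have "det Q * det (transpose Q) = 1"
    using QQt by (metis det_I det_mul)
  moreover have "det Dm = (\<Prod>i\<in>UNIV. c i)"
    by (subst det_diagonal) (simp_all add: Dm_def)
  ultimately show ?thesis by (simp add: det_mul det_transpose algebra_simps)
qed

lemma dg_inv: assumes "\<And>i. c i * d i = 1" shows "matrix_inv (dg c) = dg d"
proof -
  have 1: "dg c ** dg d = mat 1" "dg d ** dg c = mat 1"
    using assms by (simp_all add: dg_mult dg_one[symmetric] mult.commute)
  show ?thesis unfolding matrix_inv_def
  proof (rule some_equality)
    fix A' assume H: "dg c ** A' = mat 1 \<and> A' ** dg c = mat 1"
    have "A' = A' ** (dg c ** dg d)" by (simp add: 1)
    also have "\<dots> = (A' ** dg c) ** dg d" by (simp add: matrix_mul_assoc)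
    also have "\<dots> = dg d" using H by simp
    finally show "A' = dg d" .
  qed (use 1 in simp)
qed

definition MMe where "MMe = MM e"

lemma MM_ddot: "MM e \<bullet>\<bullet> Z = dg (\<lambda>i. co Z i i)"
  by (simp add: vec_eq_iff ddot_def MM_def dg_entry co_def inner_vec_def matrix_vector_mult_def
        sum_3 algebra_simps)

lemma co_MM: "co (MM e \<bullet>\<bullet> Z) a b = (if a = b then co Z a a else 0)"
  by (simp add: MM_ddot co_dg)

end

locale spectral = ortho +
  fixes B :: mat3 and lam :: "3 \<Rightarrow> real"
  assumes eig: "\<And>i. B *v e i = lam i *\<^sub>R e i" and lpos: "\<And>i. 0 < lam i"
begin

lemma B_dg: "B = dg lam"
proof (rule co_eq)
  fix a b show "co B a b = co (dg lam) a b"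
    unfolding co_dg by (simp add: co_def eig orth)
qed

lemma lps: "0 \<le> s \<Longrightarrow> 0 < lam i + s"
  using lpos[of i] by linarith
lemma lps_ne[simp]: "0 \<le> s \<Longrightarrow> lam i + s \<noteq> 0" "0 \<le> s \<Longrightarrow> s + lam i \<noteq> 0"
  using lpos[of i] by linarith+

lemma shift_dg: "B + s *\<^sub>R mat 1 = dg (\<lambda>i. lam i + s)"
  by (simp add: B_dg dg_one[symmetric] dg_scale dg_add)

lemma inv_shift: "0 \<le> s \<Longrightarrow> matrix_inv (B + s *\<^sub>R mat 1) = dg (\<lambda>i. 1 / (lam i + s))"
  unfolding shift_dg by (rule dg_inv) simp

lemma det_shift: "det (B + s *\<^sub>R mat 1) = (\<Prod>i\<in>UNIV. lam i + s)"
  unfolding shift_dg dg_det ..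

definition g :: "3 \<Rightarrow> 3 \<Rightarrow> real \<Rightarrow> real" where
  "g i j s = 1 / ((lam i + s) * (lam j + s) * sqrt (\<Prod>k\<in>UNIV. lam k + s))"

definition Sij :: "3 \<Rightarrow> 3 \<Rightarrow> tensor4" where
  "Sij i j = symmetrize (tprod (outer (e i) (e i)) (outer (e j) (e j)))"

lemma tprod_dg: "tprod (dg c) (dg c) =
   (\<lambda>x y z t. \<Sum>i\<in>UNIV. \<Sum>j\<in>UNIV. (c i * c j) * tprod (outer (e i) (e i)) (outer (e j) (e j)) x y z t)"
  by (simp add: tprod_def dg_entry outer_def sum_product fun_eq_iff algebra_simps)

lemma sym_tprod_dg: "symmetrize (tprod (dg c) (dg c)) a b x y =
   (\<Sum>i\<in>UNIV. \<Sum>j\<in>UNIV. (c i * c j) * Sij i j a b x y)"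
  unfolding tprod_dg sym_sum sym_scale Sij_def ..

lemma integrand_eq:
  assumes "0 \<le> s"
  shows "symmetrize (tprod (matrix_inv (B + s *\<^sub>R mat 1)) (matrix_inv (B + s *\<^sub>R mat 1))) a b x y
          / sqrt (det (B + s *\<^sub>R mat 1)) = (\<Sum>i\<in>UNIV. \<Sum>j\<in>UNIV. Sij i j a b x y * g i j s)"
  unfolding inv_shift[OF assms] det_shift sym_tprod_dg g_def
  by (simp add: sum_divide_distrib)

lemma g_nonneg: "0 \<le> s \<Longrightarrow> 0 \<le> g i j s"
  using lpos by (simp add: g_def add_pos_nonneg prod_pos less_imp_le)

lemma g_cont: "continuous_on {0..} (g i j)"
  unfolding g_def
  by (intro continuous_intros)
     (auto intro!: prod_pos lps simp: less_imp_neq[symmetric])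

lemma P_pos: "0 \<le> s \<Longrightarrow> 0 < (\<Prod>k\<in>UNIV. lam k + s)"
  by (simp add: prod_pos lps)

lemma D_pos: "0 \<le> s \<Longrightarrow> 0 < (lam i + s) * (lam j + s) * sqrt (\<Prod>k\<in>UNIV. lam k + s)"
  by (simp add: lps P_pos)

lemma D_mono: assumes "0 \<le> s" "s \<le> t"
  shows "(lam i + s) * (lam j + s) * sqrt (\<Prod>k\<in>UNIV. lam k + s)
     \<le> (lam i + t) * (lam j + t) * sqrt (\<Prod>k\<in>UNIV. lam k + t)"
proof -
  have "(\<Prod>k\<in>UNIV. lam k + s) \<le> (\<Prod>k\<in>UNIV. lam k + t)"
    by (rule prod_mono) (use assms lps[of s] in \<open>auto simp: less_imp_le\<close>)
  then have "sqrt (\<Prod>k\<in>UNIV. lam k + s) \<le> sqrt (\<Prod>k\<in>UNIV. lam k + t)"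
    by simp
  moreover have "(lam i + s) * (lam j + s) \<le> (lam i + t) * (lam j + t)"
    using assms lps[of s i] lps[of s j] by (intro mult_mono) auto
  ultimately show ?thesis
    using assms lps[of s i] lps[of s j] P_pos[of s]
    by (intro mult_mono) auto
qed

lemma leb0: "{0::real..} \<in> sets lebesgue"
  using lebesgue_closedin[of UNIV "{0::real..}"] by simp

lemma g_integrable: "g i j integrable_on {0..}"
proof -
  define r where "r = sqrt (\<Prod>k\<in>UNIV. lam k)"
  have r: "0 < r" unfolding r_def using P_pos[of 0] by simp
  define K where "K = (1 + 1/(lam i * lam j)) / r"
  define h where "h s = (if s \<le> 1 then K else K / s^2)" for s :: real
  have h1: "h integrable_on {0..1}"
    by (rule integrable_eq[of "\<lambda>s. K"]) (auto simp: h_def)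
  have h2: "h integrable_on {1..}"
  proof -
    have "(\<lambda>x. 1 / x ^ 2) integrable_on {1::real..}"
      using has_integral_inverse_power_to_inf[of 2 1] by (auto simp: integrable_on_def)
    then have "(\<lambda>x. K * (1 / x^2)) integrable_on {1::real..}" by (rule integrable_on_mult_right)
    then show ?thesis by (rule integrable_eq) (auto simp: h_def)
  qed
  have hint: "h integrable_on {0..}"
  proof (rule integrable_Un'[OF h1 h2])
    have "{0..1::real} \<inter> {1..} = {1}" by auto
    then show "negligible ({0..1::real} \<inter> {1..})" by simp
  qed auto
  have bnd: "\<bar>g i j s\<bar> \<le> h s" if "s \<in> {0..}" for s
  proof -
    have s: "0 \<le> s" using that by simp
    have "(\<Prod>k\<in>UNIV. lam k) \<le> (\<Prod>k\<in>UNIV. lam k + s)"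
      by (rule prod_mono) (use s lpos in \<open>auto simp: less_imp_le\<close>)
    then have rs: "r \<le> sqrt (\<Prod>k\<in>UNIV. lam k + s)" unfolding r_def by simp
    have g0: "0 \<le> g i j s" using g_nonneg[OF s] .
    show ?thesis
    proof (cases "s \<le> 1")
      case True
      have "lam i * lam j * r \<le> (lam i + s) * (lam j + s) * sqrt (\<Prod>k\<in>UNIV. lam k + s)"
        using lpos[of i] lpos[of j] r rs s
        by (intro mult_mono) (auto intro!: mult_mono simp: less_imp_le)
      then have "g i j s \<le> 1 / (lam i * lam j * r)"
        unfolding g_def using lpos[of i] lpos[of j] r by (intro frac_le) auto
      also have "\<dots> \<le> K"
        unfolding K_def using lpos[of i] lpos[of j] r by (simp add: field_simps)
      finally show ?thesis using True g0 by (simp add: h_def)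
    next
      case False
      have "s * s * r \<le> (lam i + s) * (lam j + s) * sqrt (\<Prod>k\<in>UNIV. lam k + s)"
        using lpos[of i] lpos[of j] r rs False
        by (intro mult_mono) (auto intro!: mult_mono simp: less_imp_le)
      then have "g i j s \<le> 1 / (s * s * r)"
        unfolding g_def using False r by (intro frac_le) auto
      also have "\<dots> \<le> K / s^2"
        unfolding K_def using lpos[of i] lpos[of j] r False by (simp add: field_simps power2_eq_square)
      finally show ?thesis using False g0 by (simp add: h_def)
    qed
  qed
  have meas: "g i j \<in> borel_measurable (lebesgue_on {0..})"
    by (rule continuous_imp_measurable_on_sets_lebesgue[OF g_cont])
       (rule leb0)
  show ?thesis
    by (rule measurable_bounded_by_integrable_imp_integrable_real[OF meas hint])
       (auto intro: bnd leb0)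
qed

lemma g_pos: "0 < integral {0..} (g i j)"
proof -
  have i01: "g i j integrable_on {0..1}"
    by (rule integrable_continuous_interval) (rule continuous_on_subset[OF g_cont], auto)
  have "0 < g i j 1" unfolding g_def using D_pos[of 1 i j] by simp
  also have "\<dots> = integral {0..1} (\<lambda>s::real. g i j 1)" by (subst integral_const_real) simp
  also have "\<dots> \<le> integral {0..1} (g i j)"
  proof (rule integral_le[OF _ i01])
    show "(\<lambda>s::real. g i j 1) integrable_on {0..1}" by (rule integrable_const_ivl)
    fix s :: real assume "s \<in> {0..1}"
    then have s: "0 \<le> s" "s \<le> 1" by auto
    show "g i j 1 \<le> g i j s"
      unfolding g_def using D_mono[OF s, of i j] D_pos[OF s(1), of i j] by (intro frac_le) auto
  qed
  also have "\<dots> \<le> integral {0..} (g i j)"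
    by (rule integral_subset_le[OF _ i01 g_integrable]) (auto intro: g_nonneg)
  finally show ?thesis .
qed

definition gam :: "3 \<Rightarrow> 3 \<Rightarrow> real" where
  "gam i j = 3/4 * integral {0..} (g i j)"

lemma gam_sym: "gam i j = gam j i"
  unfolding gam_def g_def by (simp add: mult.commute mult.left_commute)

lemma gam_pos: "0 < gam i j"
  using g_pos by (simp add: gam_def)

lemma CC_form: "CC B = (\<lambda>a b x y. \<Sum>i\<in>UNIV. \<Sum>j\<in>UNIV. gam i j * Sij i j a b x y)"
proof (intro ext)
  fix a b x y
  have "CC B a b x y = 3/4 * integral {0..} (\<lambda>s. \<Sum>i\<in>UNIV. \<Sum>j\<in>UNIV. Sij i j a b x y * g i j s)"
    unfolding CC_def by (intro arg_cong[where f="\<lambda>z. 3/4*z"] integral_cong) (simp add: integrand_eq)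
  also have "\<dots> = 3/4 * (\<Sum>i\<in>UNIV. \<Sum>j\<in>UNIV. Sij i j a b x y * integral {0..} (g i j))"
    by (simp add: integral_sum integrable_sum integrable_on_mult_right g_integrable)
  finally show "CC B a b x y = (\<Sum>i\<in>UNIV. \<Sum>j\<in>UNIV. gam i j * Sij i j a b x y)"
    by (simp add: gam_def sum_distrib_left algebra_simps)
qed

end

definition symm :: "mat3 \<Rightarrow> mat3" where "symm X = (1/2) *\<^sub>R (X + transpose X)"
definition anti :: "mat3 \<Rightarrow> mat3" where "anti X = (1/2) *\<^sub>R (X - transpose X)"

lemma symm_anti: "symm X + anti X = X"
  by (simp add: symm_def anti_def vec_eq_iff field_simps)
lemma symm_sym: "symmetric_mat (symm X)"
  by (simp add: symmetric_mat_def symm_def vec_eq_iff transpose_def)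
lemma anti_tr: "transpose (anti X) = - anti X"
  by (simp add: anti_def vec_eq_iff transpose_def field_simps)
lemma symm_id: "symmetric_mat X \<Longrightarrow> symm X = X"
  by (simp add: symmetric_mat_def symm_def vec_eq_iff transpose_def)
lemma anti_zero: "symmetric_mat X \<Longrightarrow> anti X = 0"
  by (simp add: symmetric_mat_def anti_def vec_eq_iff transpose_def)
lemma symm_add: "symm (X + Y) = symm X + symm Y"
  by (simp add: symm_def vec_eq_iff transpose_def algebra_simps)
lemma symm_scale: "symm (c *\<^sub>R X) = c *\<^sub>R symm X"
  by (simp add: symm_def vec_eq_iff transpose_def algebra_simps)
lemma anti_add: "anti (X + Y) = anti X + anti Y"
  by (simp add: anti_def vec_eq_iff transpose_def algebra_simps)
lemma anti_scale: "anti (c *\<^sub>R X) = c *\<^sub>R anti X"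
  by (simp add: anti_def vec_eq_iff transpose_def algebra_simps)
lemma transpose_add': "transpose (X + Y) = transpose X + (transpose Y :: mat3)"
  by (simp add: vec_eq_iff transpose_def)
lemma sym_ddot: "minor_sym T \<Longrightarrow> symmetric_mat (T \<bullet>\<bullet> X)"
  by (simp add: minor_sym_def symmetric_mat_def ddot_def vec_eq_iff transpose_def)

lemma aux3: "(s1::real) + s2 + s3 \<le> 0 \<Longrightarrow> 0 \<le> s1 \<Longrightarrow> 0 \<le> s2 \<Longrightarrow> 0 \<le> s3 \<Longrightarrow> s1 = 0 \<and> s2 = 0 \<and> s3 = 0"
  by linarith
lemma aux_le: "(0::real) = q + 2 * t \<Longrightarrow> 0 \<le> q \<Longrightarrow> t \<le> 0" by linarith

context spectral begin

lemma C_ddot: "CC B \<bullet>\<bullet> N = (\<Sum>i\<in>UNIV. \<Sum>j\<in>UNIV. gam i j *\<^sub>R (Sij i j \<bullet>\<bullet> N))"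
  by (simp only: CC_form ddot_tsum ddot_tscale)

lemma co_S: "co (Sij i j \<bullet>\<bullet> N) a b =
  (co N j j * (if a = i \<and> b = i then 1 else 0) + co N i i * (if a = j \<and> b = j then 1 else 0)
   + (co N i j + co N j i) * ((if a = i \<and> b = j then 1 else 0) + (if a = j \<and> b = i then 1 else 0))) / 6"
  unfolding Sij_def S_outer_ddot co_add co_scale co_outer nn_co by simp

lemma co_C_raw: "co (CC B \<bullet>\<bullet> N) a b = (\<Sum>i\<in>UNIV. \<Sum>j\<in>UNIV. gam i j *
  (co N j j * (if a = i \<and> b = i then 1 else 0) + co N i i * (if a = j \<and> b = j then 1 else 0)
   + (co N i j + co N j i) * ((if a = i \<and> b = j then 1 else 0) + (if a = j \<and> b = i then 1 else 0)))) / 6"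
  unfolding C_ddot co_sum co_scale co_S by (simp add: sum_divide_distrib)

lemma co_C: "co (CC B \<bullet>\<bullet> N) a b =
  (if a = b then (\<Sum>j\<in>UNIV. gam a j * co N j j)/3 + 2/3 * gam a a * co N a a
   else gam a b * (co N a b + co N b a)/3)"
proof -
  have g: "gam 1 2 = gam 2 1" "gam 1 3 = gam 3 1" "gam 2 3 = gam 3 2" using gam_sym by blast+
  show ?thesis unfolding co_C_raw
    using exhaust_3[of a] exhaust_3[of b]
    apply (elim disjE)
    apply (simp_all add: sum_3 g)
    done
qed


end
definition Eb :: "3 \<Rightarrow> 3 \<Rightarrow> mat3" where
  "Eb c d = (\<chi> x y. ((if x = c \<and> y = d then 1 else 0) + (if x = d \<and> y = c then 1 else 0)) / 2)"
lemma dsum: fixes f :: "3 \<Rightarrow> 3 \<Rightarrow> real" shows "(\<Sum>c\<in>UNIV. \<Sum>d\<in>UNIV. f c d * (if x = c \<and> y = d then 1 else 0)) = f x y"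
proof -
  have "(\<Sum>d\<in>UNIV. f c d * (if x = c \<and> y = d then 1 else 0)) = (if x = c then f c y else 0)" for c
  proof (cases "x = c")
    case True
    have "(\<Sum>d\<in>UNIV. f c d * (if x = c \<and> y = d then 1 else 0)) = (\<Sum>d\<in>UNIV. if y = d then f c d else 0)"
      using True by (intro sum.cong) auto
    then show ?thesis using True by (simp add: sum.delta')
  qed simp
  then show ?thesis by simp
qed
lemma Eb_sum: assumes "symmetric_mat M" shows "(\<Sum>c\<in>UNIV. \<Sum>d\<in>UNIV. M $ c $ d *\<^sub>R Eb c d) = M"
proof -
  have s: "M $ y $ x = M $ x $ y" for x y
  proof -
    have "transpose M $ x $ y = M $ y $ x" by (simp add: transpose_def)
    then show ?thesis using assms by (simp add: symmetric_mat_def)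
  qed
  show ?thesis
    unfolding vec_eq_iff
  proof (intro allI)
    fix x y
    have "(\<Sum>c\<in>UNIV. \<Sum>d\<in>UNIV. M $ c $ d *\<^sub>R Eb c d) $ x $ y
       = (\<Sum>c\<in>UNIV. \<Sum>d\<in>UNIV. M $ c $ d * (if x = c \<and> y = d then 1 else 0)) / 2
       + (\<Sum>c\<in>UNIV. \<Sum>d\<in>UNIV. M $ c $ d * (if y = c \<and> x = d then 1 else 0)) / 2"
      by (simp add: sum_component Eb_def sum_divide_distrib sum.distrib[symmetric] add_divide_distrib conj_commute distrib_left)
    also have "\<dots> = M $ x $ y" using dsum[of "\<lambda>c d. M $ c $ d" x y] dsum[of "\<lambda>c d. M $ c $ d" y x] s[of x y]
      by simp
    finally show "(\<Sum>c\<in>UNIV. \<Sum>d\<in>UNIV. M $ c $ d *\<^sub>R Eb c d) $ x $ y = M $ x $ y" .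
  qed
qed
lemma Eb_swap: "Eb c d = Eb d c"
  unfolding Eb_def by (simp only: add.commute)

lemma Eb_entry: "Eb c d $ i $ j = ((if i = c \<and> j = d then 1 else 0) + (if i = d \<and> j = c then 1 else 0)) / 2"
  unfolding Eb_def by (simp only: vec_lambda_beta)

lemma Eb_sym: "symmetric_mat (Eb c d)"
  unfolding symmetric_mat_def vec_eq_iff
proof (intro allI)
  fix i j
  have 1: "(j = c \<and> i = d) = (i = d \<and> j = c)" "(j = d \<and> i = c) = (i = c \<and> j = d)" by blast+
  have "transpose (Eb c d) $ i $ j = Eb c d $ j $ i" by (simp only: transpose_def vec_lambda_beta)
  also have "\<dots> = Eb c d $ i $ j" by (simp only: Eb_entry 1 add.commute)
  finally show "transpose (Eb c d) $ i $ j = Eb c d $ i $ j" .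
qed

context spectral begin
lemma C_sym: "symmetric_mat (CC B \<bullet>\<bullet> N)"
  unfolding symmetric_co co_C by (simp add: gam_sym add.commute)

lemma C_MM: "CC B \<bullet>\<bullet> (MM e \<bullet>\<bullet> N) = MM e \<bullet>\<bullet> (CC B \<bullet>\<bullet> N)"
  by (rule co_eq) (simp add: co_C co_MM)

lemma gam_psd: "0 \<le> (\<Sum>a\<in>UNIV. \<Sum>j\<in>UNIV. x a * x j * gam a j)"
proof -
  have int1: "(\<lambda>s. x a * x j * g a j s) integrable_on {0..}" for a j
    by (rule integrable_on_mult_right) (rule g_integrable)
  have int2: "(\<lambda>s. \<Sum>j\<in>UNIV. x a * x j * g a j s) integrable_on {0..}" for a
    by (rule integrable_sum) (auto intro: int1)
  have "integral {0..} (\<lambda>s. \<Sum>a\<in>UNIV. \<Sum>j\<in>UNIV. x a * x j * g a j s)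
      = (\<Sum>a\<in>UNIV. integral {0..} (\<lambda>s. \<Sum>j\<in>UNIV. x a * x j * g a j s))"
    by (rule integral_sum) (auto intro: int2)
  also have "\<dots> = (\<Sum>a\<in>UNIV. \<Sum>j\<in>UNIV. integral {0..} (\<lambda>s. x a * x j * g a j s))"
    by (intro sum.cong refl integral_sum) (auto intro: int1)
  also have "\<dots> = (\<Sum>a\<in>UNIV. \<Sum>j\<in>UNIV. x a * x j * integral {0..} (g a j))"
    by (simp only: integral_mult_right)
  finally have I: "(\<Sum>a\<in>UNIV. \<Sum>j\<in>UNIV. x a * x j * gam a j) =
      3/4 * integral {0..} (\<lambda>s. \<Sum>a\<in>UNIV. \<Sum>j\<in>UNIV. x a * x j * g a j s)"
    by (simp only: gam_def sum_distrib_left mult.assoc mult.left_commute[of "3/4"])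
  have pw: "0 \<le> (\<Sum>a\<in>UNIV. \<Sum>j\<in>UNIV. x a * x j * g a j s)" if "s \<in> {0..}" for s
  proof -
    have s: "0 \<le> s" using that by simp
    define r where "r = sqrt (\<Prod>k\<in>UNIV. lam k + s)"
    have r: "0 < r" unfolding r_def using P_pos[OF s] by simp
    have "(\<Sum>a\<in>UNIV. x a / (lam a + s))^2 / r
        = (\<Sum>a\<in>UNIV. \<Sum>j\<in>UNIV. (x a / (lam a + s)) * (x j / (lam j + s)) / r)"
      by (simp add: power2_eq_square sum_product sum_divide_distrib)
    also have "\<dots> = (\<Sum>a\<in>UNIV. \<Sum>j\<in>UNIV. x a * x j * g a j s)"
      by (intro sum.cong refl) (simp add: g_def r_def)
    finally show ?thesis using r by (metis divide_nonneg_pos zero_le_power2)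
  qed
  have "0 \<le> integral {0..} (\<lambda>s. \<Sum>a\<in>UNIV. \<Sum>j\<in>UNIV. x a * x j * g a j s)"
    by (rule integral_nonneg) (auto intro: integrable_sum int2 pw)
  then show ?thesis unfolding I by simp
qed

lemma C_inj: assumes N: "symmetric_mat N" and z: "CC B \<bullet>\<bullet> N = 0" shows "N = 0"
proof -
  have z': "co (CC B \<bullet>\<bullet> N) a b = 0" for a b using z by (simp add: co_zero)
  have Ns: "co N a b = co N b a" for a b using N symmetric_co by blast
  have off: "co N a b = 0" if "a \<noteq> b" for a b
    using z'[of a b] that Ns[of a b] gam_pos[of a b] by (simp add: co_C)
  define x where "x a = co N a a" for a
  have eq: "(\<Sum>j\<in>UNIV. gam a j * x j) + 2 * gam a a * x a = 0" for a
    using z'[of a a] by (simp add: co_C x_def)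
  have e1: "gam 1 1 * x 1 + gam 1 2 * x 2 + gam 1 3 * x 3 + 2 * gam 1 1 * x 1 = 0"
    using eq[of 1] by (simp add: sum_3)
  have e2: "gam 2 1 * x 1 + gam 2 2 * x 2 + gam 2 3 * x 3 + 2 * gam 2 2 * x 2 = 0"
    using eq[of 2] by (simp add: sum_3)
  have e3: "gam 3 1 * x 1 + gam 3 2 * x 2 + gam 3 3 * x 3 + 2 * gam 3 3 * x 3 = 0"
    using eq[of 3] by (simp add: sum_3)
  have p: "0 \<le> x 1 * x 1 * gam 1 1 + x 1 * x 2 * gam 1 2 + x 1 * x 3 * gam 1 3
     + (x 2 * x 1 * gam 2 1 + x 2 * x 2 * gam 2 2 + x 2 * x 3 * gam 2 3)
     + (x 3 * x 1 * gam 3 1 + x 3 * x 2 * gam 3 2 + x 3 * x 3 * gam 3 3)"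
    using gam_psd[of x] by (simp add: sum_3 add.assoc)
  have comb: "x 1 * (gam 1 1 * x 1 + gam 1 2 * x 2 + gam 1 3 * x 3 + 2 * gam 1 1 * x 1)
     + x 2 * (gam 2 1 * x 1 + gam 2 2 * x 2 + gam 2 3 * x 3 + 2 * gam 2 2 * x 2)
     + x 3 * (gam 3 1 * x 1 + gam 3 2 * x 2 + gam 3 3 * x 3 + 2 * gam 3 3 * x 3)
     = (x 1 * x 1 * gam 1 1 + x 1 * x 2 * gam 1 2 + x 1 * x 3 * gam 1 3
     + (x 2 * x 1 * gam 2 1 + x 2 * x 2 * gam 2 2 + x 2 * x 3 * gam 2 3)
     + (x 3 * x 1 * gam 3 1 + x 3 * x 2 * gam 3 2 + x 3 * x 3 * gam 3 3))
     + 2 * (gam 1 1 * (x 1 * x 1) + gam 2 2 * (x 2 * x 2) + gam 3 3 * (x 3 * x 3))"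
    by (simp add: algebra_simps)
  have n: "0 \<le> gam a a * (x a * x a)" for a
    using gam_pos[of a a] by simp
  have "gam a a * (x a * x a) = 0" for a
  proof -
    have "gam 1 1 * (x 1 * x 1) + gam 2 2 * (x 2 * x 2) + gam 3 3 * (x 3 * x 3) \<le> 0"
    proof -
      have "0 = (x 1 * x 1 * gam 1 1 + x 1 * x 2 * gam 1 2 + x 1 * x 3 * gam 1 3
     + (x 2 * x 1 * gam 2 1 + x 2 * x 2 * gam 2 2 + x 2 * x 3 * gam 2 3)
     + (x 3 * x 1 * gam 3 1 + x 3 * x 2 * gam 3 2 + x 3 * x 3 * gam 3 3))
     + 2 * (gam 1 1 * (x 1 * x 1) + gam 2 2 * (x 2 * x 2) + gam 3 3 * (x 3 * x 3))"
        using comb by (simp only: e1 e2 e3 mult_zero_right add_0_left)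
      then show ?thesis by (rule aux_le[OF _ p])
    qed
    from aux3[OF this n[of 1] n[of 2] n[of 3]] show ?thesis using exhaust_3[of a] by metis
  qed
  then have diag: "co N a a = 0" for a using gam_pos[of a a] by (metis x_def less_irrefl mult_eq_0_iff)
  show ?thesis
    by (rule co_eq) (metis co_zero diag off)
qed

definition L :: "mat3 \<Rightarrow> mat3" where "L X = CC B \<bullet>\<bullet> symm X + anti X"

lemma L_linear: "linear L"
  by (rule linearI) (simp_all add: L_def symm_add symm_scale anti_add anti_scale ddot_add ddot_scale
      algebra_simps)

lemma L_decomp: assumes "L X = M" "symmetric_mat M" shows "CC B \<bullet>\<bullet> symm X = M" "anti X = 0"
proof -
  have t: "transpose (L X) = CC B \<bullet>\<bullet> symm X - anti X"
    using C_sym[of "symm X"] by (simp add: L_def transpose_add' anti_tr symmetric_mat_def)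
  have "transpose M = M" using assms(2) by (simp add: symmetric_mat_def)
  then have "CC B \<bullet>\<bullet> symm X + anti X = CC B \<bullet>\<bullet> symm X - anti X"
    using t assms(1) by (simp add: L_def)
  then show a: "anti X = 0" by (simp add: vec_eq_iff)
  show "CC B \<bullet>\<bullet> symm X = M" using assms(1) a by (simp add: L_def)
qed

lemma L_inj: "inj L"
proof -
  have "X = 0" if "L X = 0" for X
  proof -
    have s0: "symmetric_mat (0::mat3)" by (simp add: symmetric_mat_def vec_eq_iff transpose_def)
    have "CC B \<bullet>\<bullet> symm X = 0" "anti X = 0" using L_decomp[OF that s0] by simp_all
    then have "symm X = 0" using C_inj symm_sym by blast
    then show ?thesis using symm_anti[of X] \<open>anti X = 0\<close> by simp
  qed
  then show ?thesis using L_linear by (simp add: linear_inj_iff_eq_0)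
qed

lemma L_surj: "surj L"
  using L_linear L_inj by (rule linear_inj_imp_surj)

definition hh :: "mat3 \<Rightarrow> mat3" where "hh Y = symm (SOME X. L X = Y)"

lemma hh: assumes "symmetric_mat Y" shows "CC B \<bullet>\<bullet> hh Y = Y" "symmetric_mat (hh Y)"
proof -
  have "\<exists>X. L X = Y" using L_surj by (metis surjD)
  then have "L (SOME X. L X = Y) = Y" by (rule someI_ex)
  then show "CC B \<bullet>\<bullet> hh Y = Y" using L_decomp assms by (simp add: hh_def)
  show "symmetric_mat (hh Y)" by (simp add: hh_def symm_sym)
qed

definition D0 :: tensor4 where "D0 a b c d = hh (Eb c d) $ a $ b"

lemma D0_minor: "minor_sym D0"
  unfolding minor_sym_def D0_def
proof (intro allI conjI)
  fix a b c d
  have "symmetric_mat (hh (Eb c d))" by (simp add: hh_def symm_sym)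
  moreover have "transpose (hh (Eb c d)) $ a $ b = hh (Eb c d) $ b $ a" by (simp add: transpose_def)
  ultimately show "hh (Eb c d) $ a $ b = hh (Eb c d) $ b $ a"
    unfolding symmetric_mat_def by simp
  show "hh (Eb c d) $ a $ b = hh (Eb d c) $ a $ b" by (simp only: Eb_swap)
qed

lemma D0_ddot: "D0 \<bullet>\<bullet> M = (\<Sum>c\<in>UNIV. \<Sum>d\<in>UNIV. M $ c $ d *\<^sub>R hh (Eb c d))"
  unfolding vec_eq_iff ddot_def D0_def by (simp add: sum_component mult.commute)

lemma D0_right: assumes "symmetric_mat M" shows "CC B \<bullet>\<bullet> (D0 \<bullet>\<bullet> M) = M"
proof -
  have "CC B \<bullet>\<bullet> hh (Eb c d) = Eb c d" for c d
    by (rule hh(1)[OF Eb_sym])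
  then show ?thesis unfolding D0_ddot ddot_sum ddot_scale using Eb_sum[OF assms] by simp
qed

lemma sym_diff: "symmetric_mat X \<Longrightarrow> symmetric_mat Y \<Longrightarrow> symmetric_mat (X - Y)"
  by (simp add: symmetric_mat_def vec_eq_iff transpose_def)

lemma D0_left: assumes "symmetric_mat M" shows "D0 \<bullet>\<bullet> (CC B \<bullet>\<bullet> M) = M"
proof -
  have "CC B \<bullet>\<bullet> (D0 \<bullet>\<bullet> (CC B \<bullet>\<bullet> M) - M) = 0"
    using D0_right[OF C_sym] by (simp add: ddot_diff)
  moreover have "symmetric_mat (D0 \<bullet>\<bullet> (CC B \<bullet>\<bullet> M) - M)"
    by (rule sym_diff[OF sym_ddot[OF D0_minor] assms])
  ultimately have "D0 \<bullet>\<bullet> (CC B \<bullet>\<bullet> M) - M = 0" by (rule C_inj[rotated])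
  then show ?thesis by simp
qed

lemma DD_spec: "minor_sym (DD B) \<and> (\<forall>M. symmetric_mat M \<longrightarrow>
              CC B \<bullet>\<bullet> (DD B \<bullet>\<bullet> M) = M \<and> DD B \<bullet>\<bullet> (CC B \<bullet>\<bullet> M) = M)"
  unfolding DD_def by (rule someI[of _ D0]) (simp add: D0_minor D0_right D0_left)

lemma MM_sym: "symmetric_mat (MM e \<bullet>\<bullet> Z)"
  unfolding MM_ddot symmetric_co co_dg by simp

lemma DD_MM: assumes "symmetric_mat N" shows "DD B \<bullet>\<bullet> (MM e \<bullet>\<bullet> N) = MM e \<bullet>\<bullet> (DD B \<bullet>\<bullet> N)"
proof -
  have Dm: "minor_sym (DD B)" using DD_spec by (rule conjunct1)
  have Dr: "CC B \<bullet>\<bullet> (DD B \<bullet>\<bullet> M) = M" if "symmetric_mat M" for M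
    using DD_spec that by blast
  have Ds: "symmetric_mat (DD B \<bullet>\<bullet> Z)" for Z by (rule sym_ddot[OF Dm])
  have c1: "CC B \<bullet>\<bullet> (DD B \<bullet>\<bullet> (MM e \<bullet>\<bullet> N)) = MM e \<bullet>\<bullet> N"
    by (rule Dr[OF MM_sym])
  have c2: "CC B \<bullet>\<bullet> (MM e \<bullet>\<bullet> (DD B \<bullet>\<bullet> N)) = MM e \<bullet>\<bullet> N"
    by (simp only: C_MM Dr[OF assms])
  have "CC B \<bullet>\<bullet> (DD B \<bullet>\<bullet> (MM e \<bullet>\<bullet> N) - MM e \<bullet>\<bullet> (DD B \<bullet>\<bullet> N)) = 0"
    by (simp add: ddot_diff c1 c2)
  moreover have "symmetric_mat (DD B \<bullet>\<bullet> (MM e \<bullet>\<bullet> N) - MM e \<bullet>\<bullet> (DD B \<bullet>\<bullet> N))"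
    by (rule sym_diff[OF Ds MM_sym])
  ultimately have "DD B \<bullet>\<bullet> (MM e \<bullet>\<bullet> N) - MM e \<bullet>\<bullet> (DD B \<bullet>\<bullet> N) = 0" by (rule C_inj[rotated])
  then show ?thesis by simp
qed

end

theorem mainTheorem15:
  fixes B F G :: "real^3^3" and e :: "3 \<Rightarrow> real^3" and \<kappa> :: real
  assumes "spd B"
    and "\<forall>i j. e i \<bullet> e j = (if i = j then 1 else 0)"
    and "\<forall>i. \<exists>c::real. B *v e i = c *\<^sub>R e i"
  shows "(\<forall>N. symmetric_mat N \<longrightarrow> DD B \<bullet>\<bullet> (MM e \<bullet>\<bullet> N) = MM e \<bullet>\<bullet> (DD B \<bullet>\<bullet> N))
    \<and> ((symmetric_mat F \<and> G = - (DD B \<bullet>\<bullet> F) \<and> 0 < \<kappa> \<and> \<kappa> \<le> 1) \<longrightarrow>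
         G - (1 - \<kappa>) *\<^sub>R (MM e \<bullet>\<bullet> G) = - (DD B \<bullet>\<bullet> (F - (1 - \<kappa>) *\<^sub>R (MM e \<bullet>\<bullet> F))))"
proof -
  define lam where "lam i = (SOME c::real. B *v e i = c *\<^sub>R e i)" for i
  have eig: "B *v e i = lam i *\<^sub>R e i" for i
    unfolding lam_def using assms(3) by (metis (mono_tags, lifting) someI_ex)
  have orth: "e i \<bullet> e j = (if i = j then 1 else 0)" for i j using assms(2) by blast
  have pos: "0 < lam i" for i
  proof -
    have ne: "e i \<noteq> 0" using orth[of i i] by auto
    have "0 < e i \<bullet> (B *v e i)" using assms(1) ne unfolding spd_def by blast
    also have "\<dots> = lam i" using orth[of i i] by (simp add: eig)
    finally show ?thesis .
  qed
  interpret spectral e B lam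
    by unfold_locales (auto simp: orth eig pos)
  show ?thesis
  proof (intro conjI allI impI)
    fix N assume "symmetric_mat N"
    then show "DD B \<bullet>\<bullet> (MM e \<bullet>\<bullet> N) = MM e \<bullet>\<bullet> (DD B \<bullet>\<bullet> N)" by (rule DD_MM)
  next
    assume H: "symmetric_mat F \<and> G = - (DD B \<bullet>\<bullet> F) \<and> 0 < \<kappa> \<and> \<kappa> \<le> 1"
    then have F: "symmetric_mat F" and G: "G = - (DD B \<bullet>\<bullet> F)" by auto
    show "G - (1 - \<kappa>) *\<^sub>R (MM e \<bullet>\<bullet> G) = - (DD B \<bullet>\<bullet> (F - (1 - \<kappa>) *\<^sub>R (MM e \<bullet>\<bullet> F)))"
      unfolding G ddot_diff ddot_scale ddot_minus DD_MM[OF F] by (simp add: algebra_simps)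
  qed
qed

end
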